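(* Let $D$ be a connected ribbon with an odd number of boxes such that $D\notin\mathfrak B$. If the length of $D$ is even, then $\mathfrak r_D$ is not $p$-positive.
   Context: A connected ribbon $D$ of composition $(\alpha_1,\dots,\alpha_\ell)$ has $\alpha_r$ consecutive boxes in row $r$ (rows numbered top to bottom), with the leftmost box of row $r$ directly above the rightmost box of row $r+1$; $\ell$ is its length. $D^t$ is the transpose and $D^\circ$ the rotation by 180 degrees. $\mathfrak r_D=\sum_T x^{c(T)}$ over fillings $T$ of $D$ with letters of $\{1'<1<2'<2<\cdots\}$ having rows and columns weakly increasing, at most one unmarked $k$ per column and at most one marked $k'$ per row; $c(T)_i$ counts entries $i$ or $i'$. $\triangle_{n,k}$ is the ribbon of composition $(1^{k-1},n-k+1)$. $\mathfrak B=\bigcup_n\mathfrak B_n$ with $\mathfrak B_n=\{\triangle_{n,1},\triangle_{n,1}^t,\triangle_{n,3},\triangle_{n,3}^t,\triangle_{n,3}^\circ,(\triangle_{n,3}^t)^\circ\}$ (only the first two when $n\le 2$). A symmetric function is $p$-positive if all its coefficients in the power sum basis are nonnegative. *)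

theory Defs
  imports Complex_Main
begin

text \<open>Cells are pairs (row, column) of integers; rows are numbered top to bottom,
columns left to right.\<close>

type_synonym cell = "int \<times> int"

text \<open>Starting column of row r of the ribbon with composition alpha
(the bottom row starts in column 0).\<close>
definition ribbon_start :: "nat list \<Rightarrow> nat \<Rightarrow> int" where
  "ribbon_start \<alpha> r = (\<Sum>j\<in>{r<..<length \<alpha>}. int (\<alpha> ! j) - 1)"

definition ribbon :: "nat list \<Rightarrow> cell set" where
  "ribbon \<alpha> = {(int r, c) | r c. r < length \<alpha> \<and>
      ribbon_start \<alpha> r \<le> c \<and> c < ribbon_start \<alpha> r + int (\<alpha> ! r)}"

definition is_composition :: "nat list \<Rightarrow> bool" where
  "is_composition \<alpha> \<longleftrightarrow> \<alpha> \<noteq> [] \<and> (\<forall>x\<in>set \<alpha>. 0 < x)"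

definition transp_cells :: "cell set \<Rightarrow> cell set" where
  "transp_cells S = (\<lambda>(r, c). (c, r)) ` S"

definition rot_cells :: "cell set \<Rightarrow> cell set" where
  "rot_cells S = (\<lambda>(r, c). (- r, - c)) ` S"

definition same_diagram :: "cell set \<Rightarrow> cell set \<Rightarrow> bool" where
  "same_diagram S S' \<longleftrightarrow> (\<exists>dr dc. S' = (\<lambda>(r, c). (r + dr, c + dc)) ` S)"

definition tri :: "nat \<Rightarrow> nat \<Rightarrow> cell set" where
  "tri n k = ribbon (replicate (k - 1) 1 @ [n - k + 1])"

definition Bset :: "nat \<Rightarrow> cell set set" where
  "Bset n = (if n \<le> 2 then {tri n 1, transp_cells (tri n 1)}
     else {tri n 1, transp_cells (tri n 1), tri n 3, transp_cells (tri n 3),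
           rot_cells (tri n 3), rot_cells (transp_cells (tri n 3))})"

definition in_frakB :: "cell set \<Rightarrow> bool" where
  "in_frakB S \<longleftrightarrow> (\<exists>n\<ge>1. \<exists>E\<in>Bset n. same_diagram S E)"

text \<open>Letters 1' < 1 < 2' < 2 < ... are encoded by natural numbers:
the letter (i+1)' is encoded by 2*i and the unmarked letter (i+1) by 2*i+1.
So the order is the order on codes, a code v is marked iff it is even,
and it belongs to variable index v div 2 (variables x_0, x_1, ... are
the paper's x_1, x_2, ...).\<close>

definition filling :: "cell set \<Rightarrow> (cell \<Rightarrow> nat) \<Rightarrow> bool" where
  "filling S T \<longleftrightarrow>
     (\<forall>x. x \<notin> S \<longrightarrow> T x = 0) \<and>
     (\<forall>r c c'. (r, c) \<in> S \<longrightarrow> (r, c') \<in> S \<longrightarrow> c < c' \<longrightarrow>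
         T (r, c) \<le> T (r, c') \<and> (T (r, c) = T (r, c') \<longrightarrow> odd (T (r, c)))) \<and>
     (\<forall>r r' c. (r, c) \<in> S \<longrightarrow> (r', c) \<in> S \<longrightarrow> r < r' \<longrightarrow>
         T (r, c) \<le> T (r', c) \<and> (T (r, c) = T (r', c) \<longrightarrow> even (T (r, c))))"

definition content :: "cell set \<Rightarrow> (cell \<Rightarrow> nat) \<Rightarrow> nat \<Rightarrow> nat" where
  "content S T i = card {x \<in> S. T x div 2 = i}"

text \<open>Coefficient of the monomial x^a in r_S.\<close>
definition rcoef :: "cell set \<Rightarrow> (nat \<Rightarrow> nat) \<Rightarrow> nat" where
  "rcoef S a = card {T. filling S T \<and> content S T = a}"

text \<open>Coefficient of the monomial x^a in the power sum p_lambda.\<close>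
definition pcoef :: "nat list \<Rightarrow> (nat \<Rightarrow> nat) \<Rightarrow> nat" where
  "pcoef lam a = card {f :: nat \<Rightarrow> nat. (\<forall>j\<ge>length lam. f j = 0) \<and>
      (\<forall>i. (\<Sum>j | j < length lam \<and> f j = i. lam ! j) = a i)}"

definition partitions :: "nat \<Rightarrow> nat list set" where
  "partitions N = {lam. sorted_wrt (\<ge>) lam \<and> (\<forall>x\<in>set lam. 0 < x) \<and> sum_list lam = N}"

text \<open>A homogeneous formal power series of degree N, given by its monomial
coefficients F a, is p-positive if it equals a nonnegative combination of the
power sums p_lambda, lambda a partition of N.\<close>
definition p_positive :: "nat \<Rightarrow> ((nat \<Rightarrow> nat) \<Rightarrow> nat) \<Rightarrow> bool" where
  "p_positive N F \<longleftrightarrow> (\<exists>c :: nat list \<Rightarrow> real.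
      (\<forall>lam\<in>partitions N. 0 \<le> c lam) \<and>
      (\<forall>a. finite {i. a i \<noteq> 0} \<longrightarrow>
          real (F a) = (\<Sum>lam\<in>partitions N. c lam * real (pcoef lam a))))"

end

theory Submission
  imports Defs
begin


definition gg :: "nat \<Rightarrow> int" where "gg m = - (int m * (-1)^m)"

lemma fiber_sum:
  assumes "finite A" "\<forall>x\<in>A. k x \<le> (N::nat)"
  shows "(\<Sum>m\<le>N. int (card {x\<in>A. k x = m}) * g m) = (\<Sum>x\<in>A. g (k x))"
proof -
  have "(\<Sum>x\<in>A. g (k x)) = (\<Sum>m\<in>{..N}. \<Sum>x\<in>{x. x\<in>A \<and> k x = m}. g (k x))"
    using assms by (subst sum.group[symmetric, of A "{..N}" k]) auto
  also have "\<dots> = (\<Sum>m\<le>N. int (card {x\<in>A. k x = m}) * g m)"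
    by (rule sum.cong) auto
  finally show ?thesis by simp
qed

definition PP :: "(nat \<Rightarrow> nat) \<Rightarrow> nat set \<Rightarrow> int" where
  "PP w I = (\<Sum>S\<in>Pow I. (-1)^(sum w S))"
definition QQ :: "(nat \<Rightarrow> nat) \<Rightarrow> nat set \<Rightarrow> int" where
  "QQ w I = (\<Sum>S\<in>Pow I. int (sum w S) * (-1)^(sum w S))"

lemma Pow_sum_insert:
  assumes "finite I" "x \<notin> I"
  shows "(\<Sum>S\<in>Pow (insert x I). f S) = (\<Sum>S\<in>Pow I. f S) + (\<Sum>S\<in>Pow I. f (insert x S))"
proof -
  have d: "Pow I \<inter> insert x ` Pow I = {}" using assms by auto
  have i: "inj_on (insert x) (Pow I)" using assms unfolding inj_on_def by auto
  show ?thesis unfolding Pow_insert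
    using assms d by (subst sum.union_disjoint) (auto simp: sum.reindex[OF i])
qed

lemma PQ_insert:
  assumes "finite I" "x \<notin> I"
  shows "PP w (insert x I) = (1 + (-1)^(w x)) * PP w I"
    and "QQ w (insert x I) = (1 + (-1)^(w x)) * QQ w I + int (w x) * (-1)^(w x) * PP w I"
proof -
  have s: "\<And>S. S \<in> Pow I \<Longrightarrow> sum w (insert x S) = w x + sum w S"
    using assms by (subst sum.insert) (auto intro: finite_subset)
  have a: "(\<Sum>S\<in>Pow I. (-1::int)^(sum w (insert x S))) = (\<Sum>S\<in>Pow I. (-1)^(w x) * (-1)^(sum w S))"
    by (rule sum.cong) (simp_all add: s power_add)
  have b: "(\<Sum>S\<in>Pow I. int (sum w (insert x S)) * (-1::int)^(sum w (insert x S)))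
     = (\<Sum>S\<in>Pow I. (-1)^(w x) * (int (sum w S) * (-1)^(sum w S)) + int (w x) * (-1)^(w x) * (-1)^(sum w S))"
    by (rule sum.cong) (simp_all add: s power_add algebra_simps)
  show "PP w (insert x I) = (1 + (-1)^(w x)) * PP w I"
    unfolding PP_def using assms
    by (simp add: Pow_sum_insert a distrib_right sum_distrib_left sum.distrib)
  show "QQ w (insert x I) = (1 + (-1)^(w x)) * QQ w I + int (w x) * (-1)^(w x) * PP w I"
    unfolding PP_def QQ_def Pow_sum_insert[OF assms] b
    by (simp add: distrib_right sum_distrib_left sum.distrib algebra_simps del: of_nat_sum)
qed

lemma PQ_sign:
  assumes "finite I"
  shows "((\<forall>j\<in>I. even (w j)) \<longrightarrow> PP w I \<ge> 0 \<and> QQ w I \<ge> 0)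
       \<and> (odd (sum w I) \<longrightarrow> PP w I = 0 \<and> QQ w I \<le> 0)
       \<and> (even (sum w I) \<and> (\<exists>j\<in>I. odd (w j)) \<longrightarrow> PP w I = 0 \<and> QQ w I = 0)"
  using assms
proof (induction I rule: finite_induct)
  case empty
  then show ?case by (simp add: PP_def QQ_def)
next
  case (insert x I)
  note ih = insert.IH
  show ?case
  proof (cases "odd (w x)")
    case True
    hence e: "(-1::int)^(w x) = -1" by simp
    have P: "PP w (insert x I) = 0" using PQ_insert(1)[OF insert.hyps, of w] e by simp
    have Q: "QQ w (insert x I) = - int (w x) * PP w I" using PQ_insert(2)[OF insert.hyps, of w] e by simp
    show ?thesis
    proof (cases "\<forall>j\<in>I. even (w j)")
      case True
      hence "PP w I \<ge> 0" using ih by blast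
      moreover have "even (sum w I)" using True by (simp add: dvd_sum)
      ultimately show ?thesis using P Q \<open>odd (w x)\<close> insert.hyps
        by (auto simp: mult_nonneg_nonneg)
    next
      case False
      hence "PP w I = 0" using ih by blast
      thus ?thesis using P Q by auto
    qed
  next
    case False
    hence e: "(-1::int)^(w x) = 1" by simp
    have P: "PP w (insert x I) = 2 * PP w I" using PQ_insert(1)[OF insert.hyps, of w] e by simp
    have Q: "QQ w (insert x I) = 2 * QQ w I + int (w x) * PP w I" using PQ_insert(2)[OF insert.hyps, of w] e by simp
    have sw: "sum w (insert x I) = w x + sum w I" using insert.hyps by simp
    show ?thesis
    proof (cases "\<forall>j\<in>I. even (w j)")
      case True
      hence "PP w I \<ge> 0 \<and> QQ w I \<ge> 0" using ih by blast
      moreover have "even (sum w I)" using True by (simp add: dvd_sum)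
      ultimately show ?thesis using P Q False True sw by auto
    next
      case nall: False
      show ?thesis
      proof (cases "odd (sum w I)")
        case True
        hence "PP w I = 0 \<and> QQ w I \<le> 0" using ih by blast
        thus ?thesis using P Q False True sw nall by auto
      next
        case ev: False
        hence "PP w I = 0 \<and> QQ w I = 0" using ih nall by blast
        thus ?thesis using P Q False ev sw nall by auto
      qed
    qed
  qed
qed




definition am :: "nat \<Rightarrow> nat \<Rightarrow> nat \<Rightarrow> nat" where
  "am N m = (\<lambda>i. if i = 0 then N - m else if i = 1 then m else 0)"

lemma sum_list_nth: "sum_list lam = (\<Sum>j<length lam. lam ! j)"
  by (simp add: sum_list_sum_nth atLeast0LessThan)

lemma pcoef_am:
  assumes pos: "\<forall>x\<in>set lam. 0 < x" and N: "sum_list lam = N" and mN: "m \<le> N"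
  shows "pcoef lam (am N m) = card {S \<in> Pow {..<length lam}. (\<Sum>j\<in>S. lam ! j) = m}"
proof -
  let ?l = "length lam"
  let ?F = "{f :: nat \<Rightarrow> nat. (\<forall>j\<ge>?l. f j = 0) \<and>
      (\<forall>i. (\<Sum>j | j < ?l \<and> f j = i. lam ! j) = am N m i)}"
  let ?G = "{S \<in> Pow {..<?l}. (\<Sum>j\<in>S. lam ! j) = m}"
  define h where "h = (\<lambda>S (j::nat). if j \<in> S then 1 else (0::nat))"
  have posn: "\<And>j. j < ?l \<Longrightarrow> 0 < lam ! j" using pos by auto
  have inj: "inj_on h ?G"
  proof (rule inj_onI)
    fix S S' assume "S \<in> ?G" "S' \<in> ?G" "h S = h S'"
    then show "S = S'" unfolding h_def by (metis (full_types) one_neq_zero subsetI subset_antisym)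
  qed
  have img: "?F = h ` ?G"
  proof
    show "?F \<subseteq> h ` ?G"
    proof
      fix f assume f: "f \<in> ?F"
      have le1: "f j \<le> 1" for j
      proof (cases "j < ?l")
        case True
        show ?thesis
        proof (rule ccontr)
          assume "\<not> f j \<le> 1"
          hence "am N m (f j) = 0" unfolding am_def by auto
          hence "(\<Sum>j' | j' < ?l \<and> f j' = f j. lam ! j') = 0" using f by auto
          moreover have "lam ! j \<le> (\<Sum>j' | j' < ?l \<and> f j' = f j. lam ! j')"
            by (rule member_le_sum) (use True in auto)
          ultimately show False using posn[OF True] by simp
        qed
      next
        case False thus ?thesis using f by auto
      qed
      define S where "S = {j. j < ?l \<and> f j = 1}"
      have "f = h S"
      proof
        fix j show "f j = h S j" using le1[of j] f unfolding h_def S_def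
          by (cases "j < ?l") auto
      qed
      moreover have "S \<in> ?G"
      proof -
        have "(\<Sum>j | j < ?l \<and> f j = 1. lam ! j) = am N m 1" using f by blast
        thus ?thesis unfolding S_def am_def by auto
      qed
      ultimately show "f \<in> h ` ?G" by blast
    qed
  next
    show "h ` ?G \<subseteq> ?F"
    proof
      fix f assume "f \<in> h ` ?G"
      then obtain S where S: "S \<subseteq> {..<?l}" "(\<Sum>j\<in>S. lam ! j) = m" and fS: "f = h S" by auto
      have tot: "(\<Sum>j<?l. lam ! j) = N" using N sum_list_nth[of lam] by simp
      have split: "(\<Sum>j<?l. lam ! j) = (\<Sum>j\<in>S. lam ! j) + (\<Sum>j\<in>{..<?l} - S. lam ! j)"
        using S(1) by (metis finite_lessThan sum.subset_diff add.commute)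
      have "(\<Sum>j | j < ?l \<and> f j = i. lam ! j) = am N m i" for i
      proof -
        consider "i = 0" | "i = 1" | "i \<ge> 2" by linarith
        then show ?thesis
        proof cases
          case 1
          have "{j. j < ?l \<and> f j = i} = {..<?l} - S" using 1 fS unfolding h_def by auto
          thus ?thesis using 1 split tot S(2) unfolding am_def by simp
        next
          case 2
          have "{j. j < ?l \<and> f j = i} = S" using 2 fS S(1) unfolding h_def by auto
          thus ?thesis using 2 S(2) unfolding am_def by simp
        next
          case 3
          have e: "{j. j < ?l \<and> f j = i} = {}" using 3 fS unfolding h_def by auto
          show ?thesis using 3 unfolding am_def e by simp
        qed
      qed
      moreover have "\<forall>j\<ge>?l. f j = 0" using fS S(1) unfolding h_def by auto
      ultimately show "f \<in> ?F" by blast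
    qed
  qed
  show ?thesis unfolding pcoef_def img using card_image[OF inj] by simp
qed

lemma psi_pcoef_nonneg:
  assumes "lam \<in> partitions N" "odd N"
  shows "0 \<le> (\<Sum>m\<le>N. int (pcoef lam (am N m)) * gg m)"
proof -
  have pos: "\<forall>x\<in>set lam. 0 < x" and N: "sum_list lam = N" using assms unfolding partitions_def by auto
  let ?I = "{..<length lam}"
  let ?w = "\<lambda>j. lam ! j"
  have wI: "sum ?w ?I = N" using N sum_list_nth[of lam] by simp
  have le: "\<forall>S\<in>Pow ?I. sum ?w S \<le> N"
    using wI by (metis PowD finite_lessThan sum_mono2 zero_le)
  have "(\<Sum>m\<le>N. int (pcoef lam (am N m)) * gg m) = (\<Sum>m\<le>N. int (card {S \<in> Pow ?I. sum ?w S = m}) * gg m)"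
    using pcoef_am[OF pos N] by simp
  also have "\<dots> = (\<Sum>S\<in>Pow ?I. gg (sum ?w S))"
    by (rule fiber_sum) (use le in auto)
  also have "\<dots> = - QQ ?w ?I" unfolding QQ_def gg_def by (simp add: sum_negf)
  finally show ?thesis using PQ_sign[of ?I ?w] wI assms(2) by simp
qed




definition Fill4 :: "cell set \<Rightarrow> (cell \<Rightarrow> nat) set" where
  "Fill4 S = {T. filling S T \<and> (\<forall>x. T x < 4)}"
definition mm :: "cell set \<Rightarrow> (cell \<Rightarrow> nat) \<Rightarrow> nat" where
  "mm S T = card {x\<in>S. 2 \<le> T x}"
definition aa :: "cell set \<Rightarrow> cell \<Rightarrow> nat \<Rightarrow> int" where
  "aa S p v = (\<Sum>T\<in>{T\<in>Fill4 S. T p = v}. (-1)^(mm S T))"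
definition bb :: "cell set \<Rightarrow> cell \<Rightarrow> nat \<Rightarrow> int" where
  "bb S p v = (\<Sum>T\<in>{T\<in>Fill4 S. T p = v}. int (mm S T) * (-1)^(mm S T))"

lemma finite_Fill4: assumes "finite S" shows "finite (Fill4 S)"
proof -
  have "Fill4 S \<subseteq> {f. \<forall>x. (x \<in> S \<longrightarrow> f x \<in> {..<4}) \<and> (x \<notin> S \<longrightarrow> f x = 0)}"
    unfolding Fill4_def filling_def by auto
  thus ?thesis using finite_set_of_finite_funs[OF assms, of "{..<4::nat}" 0] finite_subset by blast
qed

lemma d4a: "(n::nat) < 4 \<Longrightarrow> (2 \<le> n) = (n div 2 = 1)" by presburger
lemma d4b: "(n::nat) < 4 \<Longrightarrow> 2 \<le> i \<Longrightarrow> n div 2 \<noteq> i" by presburger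

lemma rcoef_am:
  assumes "finite S" "card S = N" "m \<le> N"
  shows "rcoef S (am N m) = card {T\<in>Fill4 S. mm S T = m}"
proof -
  have "{T. filling S T \<and> content S T = am N m} = {T\<in>Fill4 S. mm S T = m}"
  proof (intro set_eqI iffI)
    fix T assume T: "T \<in> {T. filling S T \<and> content S T = am N m}"
    have f: "filling S T" and c: "content S T = am N m" using T by auto
    have lt: "T x < 4" for x
    proof (cases "x \<in> S")
      case False
      have "T x = 0" using f False unfolding filling_def by blast
      thus ?thesis by simp
    next
      case True
      show ?thesis
      proof (rule ccontr)
        assume "\<not> T x < 4"
        hence "am N m (T x div 2) = 0" unfolding am_def by auto
        hence "card {y\<in>S. T y div 2 = T x div 2} = 0" using c unfolding content_def by metis
        moreover have "x \<in> {y\<in>S. T y div 2 = T x div 2}" using True by auto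
        ultimately show False using assms(1) by (metis (no_types, lifting) card_0_eq empty_iff finite_subset mem_Collect_eq subsetI)
      qed
    qed
    have "{x\<in>S. 2 \<le> T x} = {x\<in>S. T x div 2 = 1}" using d4a[OF lt] by auto
    hence "mm S T = content S T 1" unfolding mm_def content_def by simp
    thus "T \<in> {T\<in>Fill4 S. mm S T = m}" using f lt c unfolding Fill4_def am_def by auto
  next
    fix T assume T: "T \<in> {T\<in>Fill4 S. mm S T = m}"
    hence f: "filling S T" and lt: "\<And>x. T x < 4" and mT: "mm S T = m" unfolding Fill4_def by auto
    have "content S T i = am N m i" for i
    proof -
      consider "i = 0" | "i = 1" | "i \<ge> 2" by linarith
      then show ?thesis
      proof cases
        case 1
        have e: "{x\<in>S. T x div 2 = i} = S - {x\<in>S. 2 \<le> T x}" using 1 by auto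
        have "card (S - {x\<in>S. 2 \<le> T x}) = card S - card {x\<in>S. 2 \<le> T x}"
          by (rule card_Diff_subset) (use assms(1) in auto)
        thus ?thesis using 1 e mT assms(2) unfolding content_def mm_def am_def by simp
      next
        case 2
        have "{x\<in>S. T x div 2 = i} = {x\<in>S. 2 \<le> T x}" using 2 d4a[OF lt] by auto
        thus ?thesis using 2 mT unfolding content_def mm_def am_def by simp
      next
        case 3
        have e: "{x\<in>S. T x div 2 = i} = {}" using 3 d4b[OF lt] by auto
        show ?thesis using 3 unfolding content_def am_def e by simp
      qed
    qed
    thus "T \<in> {T. filling S T \<and> content S T = am N m}" using f by auto
  qed
  thus ?thesis unfolding rcoef_def by simp
qed

lemma psi_r:
  assumes "finite S" "card S = N"
  shows "(\<Sum>m\<le>N. int (rcoef S (am N m)) * gg m) = - (\<Sum>v<4. bb S p v)"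
proof -
  have "(\<Sum>m\<le>N. int (rcoef S (am N m)) * gg m) = (\<Sum>m\<le>N. int (card {T\<in>Fill4 S. mm S T = m}) * gg m)"
    using rcoef_am[OF assms] by simp
  also have "\<dots> = (\<Sum>T\<in>Fill4 S. gg (mm S T))"
  proof (rule fiber_sum)
    show "finite (Fill4 S)" using finite_Fill4[OF assms(1)] .
    show "\<forall>x\<in>Fill4 S. mm S x \<le> N" unfolding mm_def using assms
      by (metis (no_types, lifting) card_mono mem_Collect_eq subsetI)
  qed
  also have "\<dots> = (\<Sum>v\<in>{..<4}. \<Sum>T\<in>{T. T\<in>Fill4 S \<and> T p = v}. gg (mm S T))"
    by (rule sum.group[symmetric]) (use finite_Fill4[OF assms(1)] in \<open>auto simp: Fill4_def simp del: split_paired_All\<close>)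
  also have "\<dots> = - (\<Sum>v<4. bb S p v)"
    unfolding bb_def gg_def by (simp add: sum_negf)
  finally show ?thesis .
qed




lemma fill_E:
  assumes cS: "(r0,q0) \<notin> S" and pS: "(r0, q0 - 1) \<in> S"
    and row: "\<And>q. (r0,q) \<in> S \<Longrightarrow> q \<le> q0 - 1"
    and col: "\<And>r. (r,q0) \<notin> S"
  shows "filling (insert (r0,q0) S) T \<longleftrightarrow>
     filling S (T((r0,q0):=0)) \<and> T (r0,q0-1) \<le> T (r0,q0) \<and> (T (r0,q0-1) = T (r0,q0) \<longrightarrow> odd (T (r0,q0)))"
    (is "?L \<longleftrightarrow> ?R")
proof
  assume L: ?L
  have "(r0, q0 - 1) \<noteq> (r0, q0)" by simp
  show ?R using L cS pS unfolding filling_def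
    by (auto simp del: split_paired_All)
next
  assume R: ?R
  let ?T0 = "T((r0,q0):=0)"
  have f: "filling S ?T0" and c1: "T (r0,q0-1) \<le> T (r0,q0)" and c2: "T (r0,q0-1) = T (r0,q0) \<longrightarrow> odd (T (r0,q0))"
    using R by auto
  have eqS: "\<And>x. x \<in> S \<Longrightarrow> ?T0 x = T x" using cS by auto
  have z: "\<forall>x. x \<notin> insert (r0,q0) S \<longrightarrow> T x = 0"
    using f unfolding filling_def by (metis fun_upd_other insertCI)
  have rows: "T (r, c) \<le> T (r, c') \<and> (T (r, c) = T (r, c') \<longrightarrow> odd (T (r, c)))"
    if h: "(r, c) \<in> insert (r0,q0) S" "(r, c') \<in> insert (r0,q0) S" "c < c'" for r c c'
  proof -
    have fr: "\<And>r c c'. (r, c) \<in> S \<Longrightarrow> (r, c') \<in> S \<Longrightarrow> c < c' \<Longrightarrow>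
         T (r, c) \<le> T (r, c') \<and> (T (r, c) = T (r, c') \<longrightarrow> odd (T (r, c)))"
      using f eqS unfolding filling_def by (metis (no_types, lifting))
    consider "(r,c) \<in> S" "(r,c') \<in> S" | "(r,c) = (r0,q0)" "(r,c') \<in> S" | "(r,c) \<in> S" "(r,c') = (r0,q0)"
      | "(r,c) = (r0,q0)" "(r,c') = (r0,q0)" using h by auto
    then show ?thesis
    proof cases
      case 1 thus ?thesis using fr h(3) by blast
    next
      case 2 thus ?thesis using row[of c'] h(3) by auto
    next
      case 3
      hence rr: "r = r0" "c' = q0" and cin: "(r0, c) \<in> S" by auto
      show ?thesis
      proof (cases "c = q0 - 1")
        case True thus ?thesis using rr c1 c2 by auto
      next
        case False
        hence "c < q0 - 1" using row[OF cin] by auto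
        hence "T (r0, c) \<le> T (r0, q0-1) \<and> (T (r0, c) = T (r0, q0-1) \<longrightarrow> odd (T (r0, c)))"
          using fr[OF cin pS] by blast
        thus ?thesis using rr c1 c2 by auto
      qed
    next
      case 4 thus ?thesis using h(3) by auto
    qed
  qed
  have cols: "T (r, c) \<le> T (r', c) \<and> (T (r, c) = T (r', c) \<longrightarrow> even (T (r, c)))"
    if h: "(r, c) \<in> insert (r0,q0) S" "(r', c) \<in> insert (r0,q0) S" "r < r'" for r r' c
  proof -
    have "c \<noteq> q0"
    proof
      assume "c = q0"
      hence "(r, c) = (r0,q0)" "(r', c) = (r0,q0)" using h col by auto
      thus False using h(3) by auto
    qed
    hence "(r, c) \<in> S" "(r', c) \<in> S" using h by auto
    thus ?thesis using f eqS h(3) unfolding filling_def by (metis (no_types, lifting))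
  qed
  show ?L unfolding filling_def using z rows cols by blast
qed

lemma fill_N:
  assumes cS: "(r0,q0) \<notin> S" and pS: "(r0 + 1, q0) \<in> S"
    and below: "\<And>r q. (r,q) \<in> S \<Longrightarrow> r0 < r"
  shows "filling (insert (r0,q0) S) T \<longleftrightarrow>
     filling S (T((r0,q0):=0)) \<and> T (r0,q0) \<le> T (r0+1,q0) \<and> (T (r0,q0) = T (r0+1,q0) \<longrightarrow> even (T (r0,q0)))"
    (is "?L \<longleftrightarrow> ?R")
proof
  assume L: ?L
  show ?R using L cS pS unfolding filling_def
    by (auto simp del: split_paired_All)
next
  assume R: ?R
  let ?T0 = "T((r0,q0):=0)"
  have f: "filling S ?T0" and c1: "T (r0,q0) \<le> T (r0+1,q0)" and c2: "T (r0,q0) = T (r0+1,q0) \<longrightarrow> even (T (r0,q0))"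
    using R by auto
  have eqS: "\<And>x. x \<in> S \<Longrightarrow> ?T0 x = T x" using cS by auto
  have z: "\<forall>x. x \<notin> insert (r0,q0) S \<longrightarrow> T x = 0"
    using f unfolding filling_def by (metis fun_upd_other insertCI)
  have rows: "T (r, c) \<le> T (r, c') \<and> (T (r, c) = T (r, c') \<longrightarrow> odd (T (r, c)))"
    if h: "(r, c) \<in> insert (r0,q0) S" "(r, c') \<in> insert (r0,q0) S" "c < c'" for r c c'
  proof -
    have "(r, c) \<in> S" "(r, c') \<in> S" using h below by (metis insert_iff prod.inject less_irrefl)+
    thus ?thesis using f eqS h(3) unfolding filling_def by (metis (no_types, lifting))
  qed
  have cols: "T (r, c) \<le> T (r', c) \<and> (T (r, c) = T (r', c) \<longrightarrow> even (T (r, c)))"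
    if h: "(r, c) \<in> insert (r0,q0) S" "(r', c) \<in> insert (r0,q0) S" "r < r'" for r r' c
  proof -
    have fc: "\<And>r r' c. (r, c) \<in> S \<Longrightarrow> (r', c) \<in> S \<Longrightarrow> r < r' \<Longrightarrow>
         T (r, c) \<le> T (r', c) \<and> (T (r, c) = T (r', c) \<longrightarrow> even (T (r, c)))"
      using f eqS unfolding filling_def by (metis (no_types, lifting))
    consider "(r,c) \<in> S" "(r',c) \<in> S" | "(r,c) = (r0,q0)" "(r',c) \<in> S" | "(r',c) = (r0,q0)"
      using h by auto
    then show ?thesis
    proof cases
      case 1 thus ?thesis using fc h(3) by blast
    next
      case 2
      hence rr: "r = r0" "c = q0" and cin: "(r', q0) \<in> S" by auto
      show ?thesis
      proof (cases "r' = r0 + 1")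
        case True thus ?thesis using rr c1 c2 by auto
      next
        case False
        hence "r0 + 1 < r'" using below[OF cin] by auto
        hence "T (r0+1, q0) \<le> T (r', q0) \<and> (T (r0+1, q0) = T (r', q0) \<longrightarrow> even (T (r0+1, q0)))"
          using fc[OF pS cin] by blast
        thus ?thesis using rr c1 c2 by auto
      qed
    next
      case 3
      hence "r' = r0" by auto
      moreover have "(r, c) \<in> S" using h 3 by auto
      ultimately show ?thesis using below h(3) by fastforce
    qed
  qed
  show ?L unfolding filling_def using z rows cols by blast
qed




lemma step_sums:
  assumes fin: "finite S" and cS: "c \<notin> S" and pS: "p \<in> S"
    and ch: "\<And>T. filling (insert c S) T \<longleftrightarrow> filling S (T(c:=0)) \<and> R (T p) (T c)"
    and d: "d < 4"
  shows "aa (insert c S) c d = (if 2 \<le> d then -1 else 1) * (\<Sum>v<4. if R v d then aa S p v else 0)"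
    and "bb (insert c S) c d = (if 2 \<le> d then - (\<Sum>v<4. if R v d then bb S p v + aa S p v else 0)
                                 else (\<Sum>v<4. if R v d then bb S p v else 0))"
proof -
  have pc: "p \<noteq> c" using cS pS by auto
  let ?A = "{T0\<in>Fill4 S. R (T0 p) d}"
  let ?up = "\<lambda>T0. T0(c:=d)"
  have z: "\<And>T0. T0 \<in> Fill4 S \<Longrightarrow> T0 c = 0" using cS unfolding Fill4_def filling_def by blast
  have img: "{T\<in>Fill4 (insert c S). T c = d} = ?up ` ?A"
  proof (intro set_eqI iffI)
    fix T assume T: "T \<in> {T\<in>Fill4 (insert c S). T c = d}"
    hence "filling S (T(c:=0))" "R (T p) (T c)" "\<forall>x. T x < 4" "T c = d"
      using ch unfolding Fill4_def by auto
    hence "T(c:=0) \<in> ?A" using pc unfolding Fill4_def by auto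
    moreover have "T = ?up (T(c:=0))" using \<open>T c = d\<close> by auto
    ultimately show "T \<in> ?up ` ?A" by blast
  next
    fix T assume "T \<in> ?up ` ?A"
    then obtain T0 where T0: "T0 \<in> Fill4 S" "R (T0 p) d" and TT: "T = T0(c:=d)" by auto
    have "T(c:=0) = T0" using TT z[OF T0(1)] by auto
    hence "filling (insert c S) T" using ch T0 TT pc unfolding Fill4_def by auto
    thus "T \<in> {T\<in>Fill4 (insert c S). T c = d}" using TT T0 d unfolding Fill4_def by auto
  qed
  have inj: "inj_on ?up ?A"
  proof (rule inj_onI)
    fix T1 T2 assume "T1 \<in> ?A" "T2 \<in> ?A" "?up T1 = ?up T2"
    thus "T1 = T2" using z by (metis (no_types, lifting) fun_upd_idem_iff fun_upd_upd mem_Collect_eq)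
  qed
  have mmup: "mm (insert c S) (?up T0) = mm S T0 + (if 2 \<le> d then 1 else 0)" if "T0 \<in> Fill4 S" for T0
  proof -
    have fs: "finite {x\<in>S. 2 \<le> T0 x}" using fin by auto
    have "{x\<in>insert c S. 2 \<le> (?up T0) x} = (if 2 \<le> d then insert c {x\<in>S. 2 \<le> T0 x} else {x\<in>S. 2 \<le> T0 x})"
      using cS by auto
    thus ?thesis unfolding mm_def using fs cS by auto
  qed
  have grp: "(\<Sum>T0\<in>?A. h T0) = (\<Sum>v<4. if R v d then (\<Sum>T0\<in>{T0\<in>Fill4 S. T0 p = v}. h T0) else 0)" for h
  proof -
    have "(\<Sum>T0\<in>?A. h T0) = (\<Sum>v\<in>{..<4}. \<Sum>T0\<in>{x. x \<in> ?A \<and> x p = v}. h T0)"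
    proof (rule sum.group[symmetric])
      show "finite ?A" using finite_Fill4[OF fin] by auto
      show "(\<lambda>x. x p) ` ?A \<subseteq> {..<4}" unfolding Fill4_def by (auto simp del: split_paired_All)
    qed simp
    also have "\<dots> = (\<Sum>v<4. if R v d then (\<Sum>T0\<in>{T0\<in>Fill4 S. T0 p = v}. h T0) else 0)"
    proof (rule sum.cong)
      fix v assume "v \<in> {..<4::nat}"
      show "(\<Sum>T0\<in>{x. x \<in> ?A \<and> x p = v}. h T0) = (if R v d then (\<Sum>T0\<in>{T0\<in>Fill4 S. T0 p = v}. h T0) else 0)"
      proof (cases "R v d")
        case True
        hence "{x. x \<in> ?A \<and> x p = v} = {T0\<in>Fill4 S. T0 p = v}" by auto
        thus ?thesis using True by simp
      next
        case False
        hence e: "{x. x \<in> ?A \<and> x p = v} = {}" by auto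
        show ?thesis unfolding e using False by simp
      qed
    qed simp
    finally show ?thesis .
  qed
  have base: "(\<Sum>T\<in>{T\<in>Fill4 (insert c S). T c = d}. h (mm (insert c S) T))
      = (\<Sum>T0\<in>?A. h (mm S T0 + (if 2 \<le> d then 1 else 0)))" for h
    unfolding img by (simp add: sum.reindex[OF inj] mmup)
  show "aa (insert c S) c d = (if 2 \<le> d then -1 else 1) * (\<Sum>v<4. if R v d then aa S p v else 0)"
  proof -
    have "aa (insert c S) c d = (\<Sum>T0\<in>?A. (if 2 \<le> d then -1 else 1) * (-1::int)^(mm S T0))"
      unfolding aa_def base[of "\<lambda>m. (-1::int)^m"] by (rule sum.cong) auto
    also have "\<dots> = (if 2 \<le> d then -1 else 1) * (\<Sum>v<4. if R v d then aa S p v else 0)"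
      unfolding sum_distrib_left[symmetric] grp aa_def by simp
    finally show ?thesis .
  qed
  show "bb (insert c S) c d = (if 2 \<le> d then - (\<Sum>v<4. if R v d then bb S p v + aa S p v else 0)
                                 else (\<Sum>v<4. if R v d then bb S p v else 0))"
  proof (cases "2 \<le> d")
    case True
    have "bb (insert c S) c d = (\<Sum>T0\<in>?A. - (int (mm S T0) * (-1::int)^(mm S T0) + (-1)^(mm S T0)))"
      unfolding bb_def base[of "\<lambda>m. int m * (-1::int)^m"] using True by (intro sum.cong) (auto simp: algebra_simps)
    also have "\<dots> = - (\<Sum>v<4. if R v d then bb S p v + aa S p v else 0)"
      unfolding sum_negf grp bb_def aa_def by (simp add: sum.distrib if_distrib cong: if_cong)
    finally show ?thesis using True by simp
  next
    case False
    have "bb (insert c S) c d = (\<Sum>T0\<in>?A. int (mm S T0) * (-1::int)^(mm S T0))"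
      unfolding bb_def base[of "\<lambda>m. int m * (-1::int)^m"] using False by (intro sum.cong) auto
    also have "\<dots> = (\<Sum>v<4. if R v d then bb S p v else 0)"
      unfolding grp bb_def by simp
    finally show ?thesis using False by simp
  qed
qed




definition rib :: "nat \<Rightarrow> nat list \<Rightarrow> cell set" where
  "rib k \<beta> = {(int k + int i, c) | i c. i < length \<beta> \<and> ribbon_start \<beta> i \<le> c \<and> c < ribbon_start \<beta> i + int (\<beta> ! i)}"

lemma ribbon_rib: "ribbon \<beta> = rib 0 \<beta>"
  unfolding ribbon_def rib_def by simp

lemma rs_cons: "ribbon_start (x # xs) r = (\<Sum>j\<in>{r..<length xs}. int (xs ! j) - 1)"
proof -
  have e: "{r<..<length (x # xs)} = Suc ` {r..<length xs}"
    by (simp add: atLeastSucLessThan_greaterThanLessThan)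
  have "ribbon_start (x # xs) r = (\<Sum>j\<in>Suc ` {r..<length xs}. int ((x#xs) ! j) - 1)"
    unfolding ribbon_start_def e ..
  also have "\<dots> = (\<Sum>j\<in>{r..<length xs}. int ((x#xs) ! Suc j) - 1)"
    by (subst sum.reindex) auto
  finally show ?thesis by simp
qed

lemma rs_cons_Suc: "ribbon_start (x # xs) (Suc r) = ribbon_start xs r"
  by (simp only: rs_cons) (simp add: ribbon_start_def atLeastSucLessThan_greaterThanLessThan)

lemma rs_cons_0: "xs \<noteq> [] \<Longrightarrow> ribbon_start (x # xs) 0 = ribbon_start xs 0 + int (xs ! 0) - 1"
proof -
  assume "xs \<noteq> []"
  hence "{0..<length xs} = insert 0 {0<..<length xs}" by auto
  thus ?thesis by (simp only: rs_cons) (simp add: ribbon_start_def)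
qed

lemma rs_single: "ribbon_start [x] 0 = 0"
  unfolding ribbon_start_def by simp

lemma rs_bound:
  assumes pos: "\<forall>x\<in>set xs. 0 < x" and i: "i < length xs"
  shows "ribbon_start xs i + int (xs ! i) \<le> ribbon_start xs 0 + int (xs ! 0)"
proof -
  have f: "\<And>i. i < length xs \<Longrightarrow> ribbon_start xs i + int (xs ! i) - 1 = (\<Sum>j\<in>{i..<length xs}. int (xs ! j) - 1)"
  proof -
    fix i assume "i < length xs"
    hence "{i..<length xs} = insert i {i<..<length xs}" by auto
    thus "ribbon_start xs i + int (xs ! i) - 1 = (\<Sum>j\<in>{i..<length xs}. int (xs ! j) - 1)"
      unfolding ribbon_start_def by simp
  qed
  have "(\<Sum>j\<in>{i..<length xs}. int (xs ! j) - 1) \<le> (\<Sum>j\<in>{0..<length xs}. int (xs ! j) - 1)"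
    by (rule sum_mono2) (use pos in \<open>auto simp: nth_mem\<close>)
  moreover have z: "0 < length xs" using i by arith
  ultimately show ?thesis using f[OF i] f[OF z] by simp
qed

definition tr :: "nat \<Rightarrow> nat list \<Rightarrow> cell" where
  "tr k \<beta> = (int k, ribbon_start \<beta> 0 + int (\<beta> ! 0) - 1)"

lemma rib_base: "rib k [1] = {(int k, 0)}"
  unfolding rib_def by (auto simp: rs_single)

lemma rib_E:
  assumes "2 \<le> a"
  shows "rib k (a # \<gamma>) = insert (int k, ribbon_start (a # \<gamma>) 0 + int a - 1) (rib k ((a - 1) # \<gamma>))"
proof -
  have rs: "ribbon_start (a # \<gamma>) i = ribbon_start ((a - 1) # \<gamma>) i" for i
    unfolding rs_cons ..
  show ?thesis
  proof (intro set_eqI iffI)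
    fix x assume "x \<in> rib k (a # \<gamma>)"
    then obtain i c where x: "x = (int k + int i, c)" "i < length (a # \<gamma>)"
      "ribbon_start (a # \<gamma>) i \<le> c" "c < ribbon_start (a # \<gamma>) i + int ((a # \<gamma>) ! i)"
      unfolding rib_def by blast
    show "x \<in> insert (int k, ribbon_start (a # \<gamma>) 0 + int a - 1) (rib k ((a - 1) # \<gamma>))"
    proof (cases i)
      case 0
      show ?thesis
      proof (cases "c = ribbon_start (a # \<gamma>) 0 + int a - 1")
        case True thus ?thesis using x 0 by simp
      next
        case False
        hence "c < ribbon_start ((a - 1) # \<gamma>) 0 + int (((a - 1) # \<gamma>) ! 0)" using x 0 rs assms by auto
        thus ?thesis using x 0 rs unfolding rib_def by auto
      qed
    next
      case (Suc j)
      hence "x = (int k + int (Suc j), c)" "Suc j < length ((a-1) # \<gamma>)"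
        "ribbon_start ((a-1) # \<gamma>) (Suc j) \<le> c" "c < ribbon_start ((a-1) # \<gamma>) (Suc j) + int (((a-1) # \<gamma>) ! (Suc j))"
        using x rs by auto
      hence "x \<in> rib k ((a - 1) # \<gamma>)" unfolding rib_def by blast
      thus ?thesis by simp
    qed
  next
    fix x assume x: "x \<in> insert (int k, ribbon_start (a # \<gamma>) 0 + int a - 1) (rib k ((a - 1) # \<gamma>))"
    show "x \<in> rib k (a # \<gamma>)"
    proof (cases "x = (int k, ribbon_start (a # \<gamma>) 0 + int a - 1)")
      case True
      have "(int k + int 0, ribbon_start (a # \<gamma>) 0 + int a - 1) \<in> rib k (a # \<gamma>)"
        unfolding rib_def using assms by auto
      thus ?thesis using True by simp
    next
      case False
      hence "x \<in> rib k ((a - 1) # \<gamma>)" using x by auto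
      then obtain i c where y: "x = (int k + int i, c)" "i < length ((a-1) # \<gamma>)"
        "ribbon_start ((a-1) # \<gamma>) i \<le> c" "c < ribbon_start ((a-1) # \<gamma>) i + int (((a-1) # \<gamma>) ! i)"
        unfolding rib_def by blast
      have "c < ribbon_start (a # \<gamma>) i + int ((a # \<gamma>) ! i)"
        using y rs assms by (cases i) auto
      thus ?thesis using y rs unfolding rib_def by auto
    qed
  qed
qed

lemma rib_N:
  assumes "\<gamma> \<noteq> []"
  shows "rib k (1 # \<gamma>) = insert (int k, ribbon_start (1 # \<gamma>) 0) (rib (Suc k) \<gamma>)"
proof (intro set_eqI iffI)
  fix x assume "x \<in> rib k (1 # \<gamma>)"
  then obtain i c where x: "x = (int k + int i, c)" "i < length (1 # \<gamma>)"
    "ribbon_start (1 # \<gamma>) i \<le> c" "c < ribbon_start (1 # \<gamma>) i + int ((1 # \<gamma>) ! i)"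
    unfolding rib_def by blast
  show "x \<in> insert (int k, ribbon_start (1 # \<gamma>) 0) (rib (Suc k) \<gamma>)"
  proof (cases i)
    case 0 thus ?thesis using x by simp
  next
    case (Suc j)
    hence "x = (int (Suc k) + int j, c)" "j < length \<gamma>" "ribbon_start \<gamma> j \<le> c" "c < ribbon_start \<gamma> j + int (\<gamma> ! j)"
      using x rs_cons_Suc by auto
    thus ?thesis unfolding rib_def by blast
  qed
next
  fix x assume x: "x \<in> insert (int k, ribbon_start (1 # \<gamma>) 0) (rib (Suc k) \<gamma>)"
  show "x \<in> rib k (1 # \<gamma>)"
  proof (cases "x = (int k, ribbon_start (1 # \<gamma>) 0)")
    case True
    have "(int k + int 0, ribbon_start (1 # \<gamma>) 0) \<in> rib k (1 # \<gamma>)"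
      unfolding rib_def by auto
    thus ?thesis using True by simp
  next
    case False
    hence "x \<in> rib (Suc k) \<gamma>" using x by auto
    then obtain j c where y: "x = (int (Suc k) + int j, c)" "j < length \<gamma>"
      "ribbon_start \<gamma> j \<le> c" "c < ribbon_start \<gamma> j + int (\<gamma> ! j)"
      unfolding rib_def by blast
    have "x = (int k + int (Suc j), c)" "Suc j < length (1 # \<gamma>)"
      "ribbon_start (1 # \<gamma>) (Suc j) \<le> c" "c < ribbon_start (1 # \<gamma>) (Suc j) + int ((1 # \<gamma>) ! (Suc j))"
      using y rs_cons_Suc by auto
    thus ?thesis unfolding rib_def by blast
  qed
qed

lemma rib_rows: "(r, q) \<in> rib k \<beta> \<Longrightarrow> int k \<le> r"
  unfolding rib_def by auto

lemma rib_row0: "(int k, q) \<in> rib k \<beta> \<longleftrightarrow> \<beta> \<noteq> [] \<and> ribbon_start \<beta> 0 \<le> q \<and> q < ribbon_start \<beta> 0 + int (\<beta> ! 0)"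
  unfolding rib_def by auto

lemma finite_rib: "finite (rib k \<beta>)"
proof -
  have "rib k \<beta> \<subseteq> (\<Union>i<length \<beta>. {int k + int i} \<times> {ribbon_start \<beta> i..<ribbon_start \<beta> i + int (\<beta> ! i)})"
    unfolding rib_def by auto
  thus ?thesis by (rule finite_subset) auto
qed




lemma sum4: "(\<Sum>v<(4::nat). f v) = f 0 + f 1 + f 2 + (f 3 :: int)"
  by (simp add: eval_nat_numeral)

definition RE :: "nat \<Rightarrow> nat \<Rightarrow> bool" where "RE u v \<longleftrightarrow> u < v \<or> (u = v \<and> odd v)"
definition RN :: "nat \<Rightarrow> nat \<Rightarrow> bool" where "RN u v \<longleftrightarrow> v < u \<or> (v = u \<and> even v)"

lemma E_vals:
  assumes "finite S" "c \<notin> S" "p \<in> S"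
    and ch: "\<And>T. filling (insert c S) T \<longleftrightarrow> filling S (T(c:=0)) \<and> RE (T p) (T c)"
  shows "aa (insert c S) c 0 = 0" "aa (insert c S) c 1 = aa S p 0 + aa S p 1"
    "aa (insert c S) c 2 = - (aa S p 0 + aa S p 1)"
    "aa (insert c S) c 3 = - (aa S p 0 + aa S p 1 + aa S p 2 + aa S p 3)"
    "bb (insert c S) c 0 = 0" "bb (insert c S) c 1 = bb S p 0 + bb S p 1"
    "bb (insert c S) c 2 = - (bb S p 0 + aa S p 0 + (bb S p 1 + aa S p 1))"
    "bb (insert c S) c 3 = - (bb S p 0 + aa S p 0 + (bb S p 1 + aa S p 1) + (bb S p 2 + aa S p 2) + (bb S p 3 + aa S p 3))"
  using step_sums[OF assms(1-3) ch, of 0] step_sums[OF assms(1-3) ch, of 1]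
    step_sums[OF assms(1-3) ch, of 2] step_sums[OF assms(1-3) ch, of 3]
  by (simp_all add: sum4 RE_def)

lemma N_vals:
  assumes "finite S" "c \<notin> S" "p \<in> S"
    and ch: "\<And>T. filling (insert c S) T \<longleftrightarrow> filling S (T(c:=0)) \<and> RN (T p) (T c)"
  shows "aa (insert c S) c 0 = aa S p 0 + aa S p 1 + aa S p 2 + aa S p 3"
    "aa (insert c S) c 1 = aa S p 2 + aa S p 3"
    "aa (insert c S) c 2 = - (aa S p 2 + aa S p 3)"
    "aa (insert c S) c 3 = 0"
    "bb (insert c S) c 0 = bb S p 0 + bb S p 1 + bb S p 2 + bb S p 3"
    "bb (insert c S) c 1 = bb S p 2 + bb S p 3"
    "bb (insert c S) c 2 = - (bb S p 2 + aa S p 2 + (bb S p 3 + aa S p 3))"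
    "bb (insert c S) c 3 = 0"
  using step_sums[OF assms(1-3) ch, of 0] step_sums[OF assms(1-3) ch, of 1]
    step_sums[OF assms(1-3) ch, of 2] step_sums[OF assms(1-3) ch, of 3]
  by (simp_all add: sum4 RN_def)

definition Inv :: "nat \<Rightarrow> int \<Rightarrow> cell set \<Rightarrow> cell \<Rightarrow> bool" where
  "Inv n \<sigma> S p \<longleftrightarrow>
    (n = 1 \<and> \<sigma> = 1 \<and> aa S p 0 = 1 \<and> aa S p 1 = 1 \<and> aa S p 2 = -1 \<and> aa S p 3 = -1
       \<and> bb S p 0 = 0 \<and> bb S p 1 = 0 \<and> bb S p 2 = -1 \<and> bb S p 3 = -1)
  \<or> (2 \<le> n \<and> aa S p 0 = 0 \<and> aa S p 1 = 2 * \<sigma> \<and> aa S p 2 = -2 * \<sigma> \<and> aa S p 3 = 0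
       \<and> bb S p 1 + bb S p 2 = -2 * \<sigma> \<and> bb S p 0 + bb S p 3 = (if odd n then 0 else 2 * \<sigma>))"

lemma Inv_E:
  assumes "Inv n \<sigma> S p" "finite S" "c \<notin> S" "p \<in> S"
    and ch: "\<And>T. filling (insert c S) T \<longleftrightarrow> filling S (T(c:=0)) \<and> RE (T p) (T c)"
  shows "Inv (Suc n) \<sigma> (insert c S) c"
  using assms(1) E_vals[OF assms(2-4) ch] unfolding Inv_def by auto

lemma Inv_N:
  assumes "Inv n \<sigma> S p" "finite S" "c \<notin> S" "p \<in> S"
    and ch: "\<And>T. filling (insert c S) T \<longleftrightarrow> filling S (T(c:=0)) \<and> RN (T p) (T c)"
  shows "Inv (Suc n) (- \<sigma>) (insert c S) c"
  using assms(1) N_vals[OF assms(2-4) ch] unfolding Inv_def by auto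

lemma Inv_base: "Inv 1 1 {c} c"
proof -
  have fill: "filling {c} T \<longleftrightarrow> (\<forall>x. x \<noteq> c \<longrightarrow> T x = 0)" for T
    unfolding filling_def by auto
  have fib: "{T\<in>Fill4 {c}. T c = v} = {(\<lambda>_. 0)(c := v)}" if "v < 4" for v
  proof (intro set_eqI iffI)
    fix T assume "T \<in> {T\<in>Fill4 {c}. T c = v}"
    thus "T \<in> {(\<lambda>_. 0)(c := v)}" unfolding Fill4_def fill by auto
  next
    fix T assume "T \<in> {(\<lambda>_. 0)(c := v)}"
    thus "T \<in> {T\<in>Fill4 {c}. T c = v}" unfolding Fill4_def fill using that by auto
  qed
  have mmv: "mm {c} ((\<lambda>_. 0)(c := v)) = (if 2 \<le> v then 1 else 0)" for v
  proof -
    have "{x\<in>{c}. 2 \<le> ((\<lambda>_. 0::nat)(c := v)) x} = (if 2 \<le> v then {c} else {})" by auto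
    thus ?thesis unfolding mm_def by simp
  qed
  show ?thesis unfolding Inv_def aa_def bb_def
    by (simp add: fib mmv)
qed




lemma RE_iff: "RE u v \<longleftrightarrow> u \<le> v \<and> (u = v \<longrightarrow> odd v)"
  unfolding RE_def by auto
lemma RN_iff: "RN u v \<longleftrightarrow> v \<le> u \<and> (v = u \<longrightarrow> even v)"
  unfolding RN_def by auto

lemma main_inv:
  assumes "is_composition \<beta>"
  shows "card (rib k \<beta>) = sum_list \<beta> \<and> tr k \<beta> \<in> rib k \<beta> \<and>
         Inv (sum_list \<beta>) ((-1)^(length \<beta> - 1)) (rib k \<beta>) (tr k \<beta>)"
  using assms
proof (induction "sum_list \<beta>" arbitrary: \<beta> k rule: less_induct)
  case less
  from less.prems obtain a \<gamma> where b: "\<beta> = a # \<gamma>" and a: "0 < a" and pos: "\<forall>x\<in>set \<gamma>. 0 < x"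
    unfolding is_composition_def by (cases \<beta>) auto
  show ?case
  proof (cases "2 \<le> a")
    case True
    let ?b' = "(a - 1) # \<gamma>"
    have comp': "is_composition ?b'" using True pos unfolding is_composition_def by auto
    have lt: "sum_list ?b' < sum_list \<beta>" using b True by simp
    note IH = less.hyps[OF lt comp', of k]
    let ?S = "rib k ?b'"
    let ?q0 = "ribbon_start (a # \<gamma>) 0 + int a - 1"
    have rs: "ribbon_start ?b' i = ribbon_start (a # \<gamma>) i" for i unfolding rs_cons ..
    have trb: "tr k ?b' = (int k, ?q0 - 1)" unfolding tr_def using rs True by auto
    have ribeq: "rib k \<beta> = insert (int k, ?q0) ?S" using rib_E[OF True] b by simp
    have cS: "(int k, ?q0) \<notin> ?S" using rib_row0[of k ?q0 ?b'] rs True by auto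
    have pS: "(int k, ?q0 - 1) \<in> ?S" using IH trb by simp
    have row: "\<And>q. (int k, q) \<in> ?S \<Longrightarrow> q \<le> ?q0 - 1" using rib_row0[of k _ ?b'] rs True by auto
    have col: "\<And>r. (r, ?q0) \<notin> ?S"
    proof
      fix r assume "(r, ?q0) \<in> ?S"
      then obtain i where i: "r = int k + int i" "i < length ?b'" "ribbon_start ?b' i \<le> ?q0"
        "?q0 < ribbon_start ?b' i + int (?b' ! i)" unfolding rib_def by blast
      show False
      proof (cases i)
        case 0 thus False using i rs True by auto
      next
        case (Suc j)
        have j: "j < length \<gamma>" using i Suc by auto
        hence ne: "\<gamma> \<noteq> []" by auto
        have "ribbon_start \<gamma> j + int (\<gamma> ! j) \<le> ribbon_start \<gamma> 0 + int (\<gamma> ! 0)" using rs_bound[OF pos j] .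
        moreover have "?q0 < ribbon_start \<gamma> j + int (\<gamma> ! j)" using i Suc rs_cons_Suc by simp
        moreover have "ribbon_start (a # \<gamma>) 0 = ribbon_start \<gamma> 0 + int (\<gamma> ! 0) - 1" using rs_cons_0[OF ne] .
        ultimately show False using True by simp
      qed
    qed
    have ch: "\<And>T. filling (insert (int k, ?q0) ?S) T \<longleftrightarrow>
         filling ?S (T((int k, ?q0):=0)) \<and> RE (T (int k, ?q0 - 1)) (T (int k, ?q0))"
      unfolding RE_iff by (rule fill_E[OF cS pS row col])
    have IHinv: "Inv (sum_list ?b') ((-1)^(length ?b' - 1)) ?S (int k, ?q0 - 1)"
      using IH unfolding trb by blast
    have inv: "Inv (Suc (sum_list ?b')) ((-1)^(length ?b' - 1)) (insert (int k, ?q0) ?S) (int k, ?q0)"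
      by (rule Inv_E[OF IHinv finite_rib cS pS ch])
    have trk: "tr k \<beta> = (int k, ?q0)" unfolding tr_def b by simp
    have sl: "Suc (sum_list ?b') = sum_list \<beta>" using b True by simp
    have len: "length ?b' = length \<beta>" using b by simp
    have cd: "card (insert (int k, ?q0) ?S) = Suc (card ?S)" by (rule card_insert_disjoint[OF finite_rib cS])
    have c1: "card (rib k \<beta>) = sum_list \<beta>" unfolding ribeq cd using IH sl by simp
    have c2: "tr k \<beta> \<in> rib k \<beta>" unfolding ribeq trk by simp
    have c3: "Inv (sum_list \<beta>) ((-1)^(length \<beta> - 1)) (rib k \<beta>) (tr k \<beta>)"
      using inv unfolding ribeq trk sl len .
    show ?thesis using c1 c2 c3 by blast
  next
    case False
    hence a1: "a = 1" using a by simp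
    show ?thesis
    proof (cases "\<gamma> = []")
      case True
      have "rib k \<beta> = {(int k, 0)}" using rib_base b a1 True by simp
      moreover have "tr k \<beta> = (int k, 0)" unfolding tr_def b a1 True by (simp add: rs_single)
      ultimately show ?thesis using Inv_base b a1 True by simp
    next
      case ne: False
      have comp': "is_composition \<gamma>" using ne pos unfolding is_composition_def by auto
      have lt: "sum_list \<gamma> < sum_list \<beta>" using b a1 by simp
      note IH = less.hyps[OF lt comp', of "Suc k"]
      let ?S = "rib (Suc k) \<gamma>"
      let ?q0 = "ribbon_start (1 # \<gamma>) 0"
      have trg: "tr (Suc k) \<gamma> = (int k + 1, ?q0)" unfolding tr_def using rs_cons_0[OF ne] by simp
      have ribeq: "rib k \<beta> = insert (int k, ?q0) ?S" using rib_N[OF ne] b a1 by simp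
      have below: "\<And>r q. (r, q) \<in> ?S \<Longrightarrow> int k < r" using rib_rows by fastforce
      have cS: "(int k, ?q0) \<notin> ?S" using below by blast
      have pS: "(int k + 1, ?q0) \<in> ?S" using IH trg by simp
      have ch: "\<And>T. filling (insert (int k, ?q0) ?S) T \<longleftrightarrow>
           filling ?S (T((int k, ?q0):=0)) \<and> RN (T (int k + 1, ?q0)) (T (int k, ?q0))"
        unfolding RN_iff by (rule fill_N[OF cS pS below])
      have IHinv: "Inv (sum_list \<gamma>) ((-1)^(length \<gamma> - 1)) ?S (int k + 1, ?q0)"
        using IH unfolding trg by blast
      have inv: "Inv (Suc (sum_list \<gamma>)) (- ((-1)^(length \<gamma> - 1))) (insert (int k, ?q0) ?S) (int k, ?q0)"
        by (rule Inv_N[OF IHinv finite_rib cS pS ch])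
      have sg: "- ((-1::int)^(length \<gamma> - 1)) = (-1)^(length \<beta> - 1)"
        using ne b by (cases \<gamma>) auto
      have trk: "tr k \<beta> = (int k, ?q0)" unfolding tr_def b a1 by simp
      have sl: "Suc (sum_list \<gamma>) = sum_list \<beta>" using b a1 by simp
      have cd: "card (insert (int k, ?q0) ?S) = Suc (card ?S)" by (rule card_insert_disjoint[OF finite_rib cS])
      have c1: "card (rib k \<beta>) = sum_list \<beta>" unfolding ribeq cd using IH sl by simp
      have c2: "tr k \<beta> \<in> rib k \<beta>" unfolding ribeq trk by simp
      have c3: "Inv (sum_list \<beta>) ((-1)^(length \<beta> - 1)) (rib k \<beta>) (tr k \<beta>)"
        using inv unfolding ribeq trk sl sg .
      show ?thesis using c1 c2 c3 by blast
    qed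
  qed
qed


lemma cast_sum: "real_of_int (\<Sum>m\<in>A. int (f m) * g m) = (\<Sum>m\<in>A. real (f m) * real_of_int (g m))"
  by (simp add: of_int_sum)

theorem mainTheorem16:
  fixes \<alpha> :: "nat list"
  assumes "is_composition \<alpha>"
    and "odd (sum_list \<alpha>)"
    and "\<not> in_frakB (ribbon \<alpha>)"
    and "even (length \<alpha>)"
  shows "\<not> p_positive (sum_list \<alpha>) (rcoef (ribbon \<alpha>))"
proof
  let ?N = "sum_list \<alpha>"
  let ?S = "ribbon \<alpha>"
  assume "p_positive ?N (rcoef ?S)"
  then obtain c :: "nat list \<Rightarrow> real" where c0: "\<forall>lam\<in>partitions ?N. 0 \<le> c lam"
    and ceq: "\<forall>a. finite {i. a i \<noteq> 0} \<longrightarrow>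
          real (rcoef ?S a) = (\<Sum>lam\<in>partitions ?N. c lam * real (pcoef lam a))"
    unfolding p_positive_def by blast
  have fin: "finite {i. am ?N m i \<noteq> 0}" for m
    by (rule finite_subset[of _ "{0,1}"]) (auto simp: am_def)
  have "(\<Sum>m\<le>?N. real (rcoef ?S (am ?N m)) * real_of_int (gg m))
      = (\<Sum>m\<le>?N. \<Sum>lam\<in>partitions ?N. c lam * (real (pcoef lam (am ?N m)) * real_of_int (gg m)))"
    using ceq fin by (simp add: sum_distrib_right mult.assoc)
  also have "\<dots> = (\<Sum>lam\<in>partitions ?N. c lam * (\<Sum>m\<le>?N. real (pcoef lam (am ?N m)) * real_of_int (gg m)))"
    by (subst sum.swap) (simp add: sum_distrib_left)
  also have "\<dots> \<ge> 0"
  proof (rule sum_nonneg)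
    fix lam assume l: "lam \<in> partitions ?N"
    have "0 \<le> real_of_int (\<Sum>m\<le>?N. int (pcoef lam (am ?N m)) * gg m)"
      using psi_pcoef_nonneg[OF l assms(2)] by (simp only: of_int_0_le_iff)
    hence "0 \<le> (\<Sum>m\<le>?N. real (pcoef lam (am ?N m)) * real_of_int (gg m))" unfolding cast_sum .
    thus "0 \<le> c lam * (\<Sum>m\<le>?N. real (pcoef lam (am ?N m)) * real_of_int (gg m))"
      using c0 l by simp
  qed
  finally have pos: "0 \<le> (\<Sum>m\<le>?N. real (rcoef ?S (am ?N m)) * real_of_int (gg m))" .
  have M: "card (rib 0 \<alpha>) = ?N" "Inv ?N ((-1)^(length \<alpha> - 1)) (rib 0 \<alpha>) (tr 0 \<alpha>)"
    using main_inv[OF assms(1), of 0] by auto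
  have ne: "\<alpha> \<noteq> []" using assms(1) unfolding is_composition_def by simp
  have sig: "(-1::int)^(length \<alpha> - 1) = -1"
  proof -
    have "odd (length \<alpha> - 1)" using ne assms(4) by (cases \<alpha>) auto
    thus ?thesis by simp
  qed
  have bsum: "(\<Sum>v<4. bb (rib 0 \<alpha>) (tr 0 \<alpha>) v) = 2"
    using M(2) assms(2) unfolding sig Inv_def sum4 by auto
  have "(\<Sum>m\<le>?N. int (rcoef (rib 0 \<alpha>) (am ?N m)) * gg m) = - (\<Sum>v<4. bb (rib 0 \<alpha>) (tr 0 \<alpha>) v)"
    by (rule psi_r[OF finite_rib M(1)])
  hence "(\<Sum>m\<le>?N. int (rcoef ?S (am ?N m)) * gg m) = -2" using bsum ribbon_rib by simp
  hence "(\<Sum>m\<le>?N. real (rcoef ?S (am ?N m)) * real_of_int (gg m)) = -2"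
    unfolding cast_sum[symmetric] by simp
  thus False using pos by simp
qed


end
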